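(* For every integer $n\ge 3$, the graph $R_n$ is a rooted directed path graph.
   Context: For $n\ge 3$, $R_n$ is the graph with vertex set $\bigcup_{i=1}^n\{a_i,b_i,c_i,d_i\}$ (all distinct, $4n$ vertices), in which two distinct vertices are adjacent iff they both belong to one of the sets $C_i=\{a_i,b_i,c_i,d_i\}$ ($1\le i\le n$) or $C'_i=\{a_j \mid i\le j\le n\}\cup\{b_i,b_{i+1},c_i\}$ ($1\le i\le n-1$); these sets are exactly the maximal cliques of $R_n$. A graph is a rooted directed path graph if it is the intersection graph of a family of directed paths in an arborescence (a rooted tree with all edges directed away from the root), i.e. vertices correspond to directed paths and two distinct vertices are adjacent iff their paths share a node. *)

theory Defs
  imports Main
begin

datatype rvert = Va nat | Vb nat | Vc nat | Vd nat

definition cliqueC :: "nat \<Rightarrow> rvert set" where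
  "cliqueC i = {Va i, Vb i, Vc i, Vd i}"

definition cliqueC' :: "nat \<Rightarrow> nat \<Rightarrow> rvert set" where
  "cliqueC' n i = {Va j | j. i \<le> j \<and> j \<le> n} \<union> {Vb i, Vb (Suc i), Vc i}"

definition R_verts :: "nat \<Rightarrow> rvert set" where
  "R_verts n = (\<Union>i\<in>{1..n}. cliqueC i)"

definition R_adj :: "nat \<Rightarrow> rvert \<Rightarrow> rvert \<Rightarrow> bool" where
  "R_adj n u v \<longleftrightarrow> u \<noteq> v \<and>
     ((\<exists>i\<in>{1..n}. u \<in> cliqueC i \<and> v \<in> cliqueC i) \<or>
      (\<exists>i\<in>{1..n-1}. u \<in> cliqueC' n i \<and> v \<in> cliqueC' n i))"

definition arborescence :: "nat set \<Rightarrow> nat \<Rightarrow> (nat \<times> nat) set \<Rightarrow> bool" where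
  "arborescence N r Arc \<longleftrightarrow> finite N \<and> r \<in> N \<and> Arc \<subseteq> N \<times> N \<and>
     (\<forall>x. (x, r) \<notin> Arc) \<and>
     (\<forall>y\<in>N. y \<noteq> r \<longrightarrow> (\<exists>!x. (x, y) \<in> Arc)) \<and>
     (\<forall>y\<in>N. (r, y) \<in> Arc\<^sup>*)"

definition dpath :: "(nat \<times> nat) set \<Rightarrow> nat list \<Rightarrow> bool" where
  "dpath Arc p \<longleftrightarrow> p \<noteq> [] \<and> (\<forall>i. Suc i < length p \<longrightarrow> (p ! i, p ! Suc i) \<in> Arc)"

definition rooted_directed_path_graph :: "'v set \<Rightarrow> ('v \<Rightarrow> 'v \<Rightarrow> bool) \<Rightarrow> bool" where
  "rooted_directed_path_graph V E \<longleftrightarrow>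
     (\<exists>N r Arc P. arborescence N r Arc \<and>
        (\<forall>v\<in>V. dpath Arc (P v) \<and> set (P v) \<subseteq> N) \<and>
        (\<forall>u\<in>V. \<forall>v\<in>V. u \<noteq> v \<longrightarrow> (E u v \<longleftrightarrow> set (P u) \<inter> set (P v) \<noteq> {})))"

end

theory Submission
  imports Defs
begin

lemma dpath_upt:
  assumes "\<And>k. lo \<le> k \<Longrightarrow> k < hi \<Longrightarrow> (k, Suc k) \<in> Arc"
    and "lo \<le> hi \<Longrightarrow> (hi, z) \<in> Arc"
  shows "dpath Arc ([lo..<Suc hi] @ [z])"
  unfolding dpath_def
proof (intro conjI allI impI)
  fix i assume i: "Suc i < length ([lo..<Suc hi] @ [z])"
  show "(([lo..<Suc hi] @ [z]) ! i, ([lo..<Suc hi] @ [z]) ! Suc i) \<in> Arc"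
  proof (cases "Suc i < Suc hi - lo")
    case True
    then have h: "lo \<le> hi" "lo + i < hi" "i < hi - lo" by auto
    have e1: "([lo..<Suc hi] @ [z]) ! i = lo + i" using True h by (simp add: nth_append)
    have e2: "([lo..<Suc hi] @ [z]) ! Suc i = Suc (lo + i)" using True h by (cases "Suc i < hi - lo") (simp_all add: nth_append)
    show ?thesis unfolding e1 e2 using assms(1) h by simp
  next
    case False
    then have si: "Suc i = Suc hi - lo" using i by (simp only: length_append length_upt list.size)
    show ?thesis
    proof (cases "lo \<le> hi")
      case True
      have e1: "([lo..<Suc hi] @ [z]) ! i = hi" using si True by (subgoal_tac "i = hi - lo") (simp_all add: nth_append)
      have e2: "([lo..<Suc hi] @ [z]) ! Suc i = z" using si True by (subgoal_tac "i = hi - lo") (simp_all add: nth_append)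
      show ?thesis unfolding e1 e2 using assms(2) True by simp
    next
      case False then show ?thesis using i by simp
    qed
  qed
qed simp

definition TA :: "nat \<Rightarrow> (nat \<times> nat) set" where
  "TA n = {(i, Suc i) | i. 1 \<le> i \<and> i < n - 1} \<union> {(min j (n-1), n+j) | j. 1 \<le> j \<and> j \<le> n}"

definition TP :: "nat \<Rightarrow> rvert \<Rightarrow> nat list" where
  "TP n v = (case v of
     Va j \<Rightarrow> [1..<Suc (min j (n-1))] @ [n+j]
   | Vb j \<Rightarrow> [max 1 (j-1)..<Suc (min j (n-1))] @ [n+j]
   | Vc j \<Rightarrow> [j..<Suc (min j (n-1))] @ [n+j]
   | Vd j \<Rightarrow> [Suc (min j (n-1))..<Suc (min j (n-1))] @ [n+j])"

definition vidx :: "rvert \<Rightarrow> nat" where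
  "vidx v = (case v of Va j \<Rightarrow> j | Vb j \<Rightarrow> j | Vc j \<Rightarrow> j | Vd j \<Rightarrow> j)"

lemma Rv: "v \<in> R_verts n \<longleftrightarrow> 1 \<le> vidx v \<and> vidx v \<le> n"
  by (cases v) (auto simp: R_verts_def cliqueC_def vidx_def)

lemma TP_dpath:
  assumes "n \<ge> 3" "1 \<le> vidx v" "vidx v \<le> n"
  shows "dpath (TA n) (TP n v)"
proof (cases v)
  case (Va j) show ?thesis unfolding TP_def Va rvert.case
    by (rule_tac dpath_upt) (use assms Va in \<open>auto simp: vidx_def TA_def\<close>)
next
  case (Vb j) show ?thesis unfolding TP_def Vb rvert.case
    by (rule_tac dpath_upt) (use assms Vb in \<open>auto simp: vidx_def TA_def\<close>)
next
  case (Vc j) show ?thesis unfolding TP_def Vc rvert.case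
    by (rule_tac dpath_upt) (use assms Vc in \<open>auto simp: vidx_def TA_def\<close>)
next
  case (Vd j) show ?thesis unfolding TP_def Vd rvert.case
    by (rule_tac dpath_upt) (use assms Vd in \<open>auto simp: vidx_def TA_def\<close>)
qed

lemma TP_set:
  assumes "n \<ge> 3" "1 \<le> vidx v" "vidx v \<le> n"
  shows "x \<in> set (TP n v) \<longleftrightarrow>
     (\<exists>i\<in>{1..n}. x = n + i \<and> v \<in> cliqueC i) \<or> (\<exists>i\<in>{1..n-1}. x = i \<and> v \<in> cliqueC' n i)"
  using assms
  by (cases v) (auto simp: TP_def vidx_def cliqueC_def cliqueC'_def)

lemma reach:
  assumes "1 \<le> y" "y < n"
  shows "(1, y) \<in> (TA n)\<^sup>*"
  using assms
proof (induction y)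
  case 0 then show ?case by simp
next
  case (Suc y)
  show ?case
  proof (cases "y = 0")
    case True then show ?thesis by simp
  next
    case False
    then have "(1, y) \<in> (TA n)\<^sup>*" using Suc by simp
    moreover have "(y, Suc y) \<in> TA n" using Suc False unfolding TA_def by auto
    ultimately show ?thesis by (rule rtrancl_into_rtrancl)
  qed
qed

lemma arb:
  assumes "n \<ge> 3"
  shows "arborescence ({1..<n} \<union> {n<..2*n}) 1 (TA n)"
  unfolding arborescence_def
proof (intro conjI ballI impI allI)
  show "finite ({1..<n} \<union> {n<..2 * n})" by simp
  show "1 \<in> {1..<n} \<union> {n<..2 * n}" using assms by simp
  show "TA n \<subseteq> ({1..<n} \<union> {n<..2 * n}) \<times> ({1..<n} \<union> {n<..2 * n})"
    using assms unfolding TA_def by auto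
  fix x show "(x, 1) \<notin> TA n" unfolding TA_def by auto
next
  fix y assume y: "y \<in> {1..<n} \<union> {n<..2 * n}" "y \<noteq> 1"
  show "\<exists>!x. (x, y) \<in> TA n"
  proof (cases "y < n")
    case True
    show ?thesis
    proof
      show "(y - 1, y) \<in> TA n" using True y unfolding TA_def by force
      fix x assume "(x, y) \<in> TA n"
      then show "x = y - 1" using True unfolding TA_def by auto
    qed
  next
    case False
    show ?thesis
    proof
      show "(min (y-n) (n-1), y) \<in> TA n" using False y unfolding TA_def
        by (auto intro!: exI[of _ "y-n"])
      fix x assume "(x, y) \<in> TA n"
      then show "x = min (y-n) (n-1)" using False unfolding TA_def by auto
    qed
  qed
next
  fix y assume y: "y \<in> {1..<n} \<union> {n<..2 * n}"
  show "(1, y) \<in> (TA n)\<^sup>*"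
  proof (cases "y < n")
    case True then show ?thesis using y reach by auto
  next
    case False
    have "(1, min (y-n) (n-1)) \<in> (TA n)\<^sup>*" using y False assms by (intro reach) auto
    moreover have "(min (y-n) (n-1), y) \<in> TA n" using False y unfolding TA_def
        by (auto intro!: exI[of _ "y-n"])
    ultimately show ?thesis by (rule rtrancl_into_rtrancl)
  qed
qed

theorem mainTheorem2:
  fixes n :: nat
  assumes "n \<ge> 3"
  shows "rooted_directed_path_graph (R_verts n) (R_adj n)"
  unfolding rooted_directed_path_graph_def
proof (intro exI conjI ballI impI)
  show "arborescence ({1..<n} \<union> {n<..2*n}) 1 (TA n)" using arb assms .
  fix v assume v: "v \<in> R_verts n"
  then show "dpath (TA n) (TP n v)" using TP_dpath assms Rv by blast
  show "set (TP n v) \<subseteq> {1..<n} \<union> {n<..2*n}"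
  proof
    fix x assume "x \<in> set (TP n v)"
    then show "x \<in> {1..<n} \<union> {n<..2*n}" using TP_set[of n v x] v Rv assms by auto
  qed
next
  fix u v assume u: "u \<in> R_verts n" and v: "v \<in> R_verts n" and uv: "u \<noteq> v"
  have su: "\<And>x. x \<in> set (TP n u) \<longleftrightarrow>
     (\<exists>i\<in>{1..n}. x = n + i \<and> u \<in> cliqueC i) \<or> (\<exists>i\<in>{1..n-1}. x = i \<and> u \<in> cliqueC' n i)"
    using TP_set assms u Rv by blast
  have sv: "\<And>x. x \<in> set (TP n v) \<longleftrightarrow>
     (\<exists>i\<in>{1..n}. x = n + i \<and> v \<in> cliqueC i) \<or> (\<exists>i\<in>{1..n-1}. x = i \<and> v \<in> cliqueC' n i)"
    using TP_set assms v Rv by blast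
  show "R_adj n u v \<longleftrightarrow> set (TP n u) \<inter> set (TP n v) \<noteq> {}"
  proof
    assume "R_adj n u v"
    then show "set (TP n u) \<inter> set (TP n v) \<noteq> {}" unfolding R_adj_def
    proof (elim conjE disjE bexE)
      fix i assume "i \<in> {1..n}" "u \<in> cliqueC i" "v \<in> cliqueC i"
      then have "n + i \<in> set (TP n u) \<inter> set (TP n v)" using su sv by blast
      then show ?thesis by blast
    next
      fix i assume "i \<in> {1..n-1}" "u \<in> cliqueC' n i" "v \<in> cliqueC' n i"
      then have "i \<in> set (TP n u) \<inter> set (TP n v)" using su sv by blast
      then show ?thesis by blast
    qed
  next
    assume "set (TP n u) \<inter> set (TP n v) \<noteq> {}"
    then obtain x where "x \<in> set (TP n u)" "x \<in> set (TP n v)" by blast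
    then have "((\<exists>i\<in>{1..n}. x = n + i \<and> u \<in> cliqueC i) \<or> (\<exists>i\<in>{1..n-1}. x = i \<and> u \<in> cliqueC' n i))
      \<and> ((\<exists>i\<in>{1..n}. x = n + i \<and> v \<in> cliqueC i) \<or> (\<exists>i\<in>{1..n-1}. x = i \<and> v \<in> cliqueC' n i))"
      using su sv by blast
    then show "R_adj n u v" unfolding R_adj_def using uv by auto
  qed
qed

end
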